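(* Let $s>0$ and let $c$ be a constant. Suppose $g\in C^1[s,\infty)$ satisfies $$g'(t)=-g(t)+\frac1t\int_s^t g(\xi)\,d\xi+\frac ct,\qquad t\in[s,\infty).$$ Then for all $t\ge s$, $$g(t)=g'(s)\,s\,e^{s}\,I(t,s)+g(s),$$ where $g'(s)=-g(s)+c\,s^{-1}$.
   Context: $I(t,s)=\int_s^t \frac{e^{-\xi}}{\xi}\,d\xi$. *)

theory Defs
  imports "HOL-Analysis.Analysis"
begin

definition I :: "real \<Rightarrow> real \<Rightarrow> real" where
  "I t s = integral {s..t} (\<lambda>\<xi>. exp (- \<xi>) / \<xi>)"

end

theory Submission
  imports Defs
begin

theorem lemma1:
  fixes g g' :: "real \<Rightarrow> real" and s c :: real
  assumes s_pos: "s > 0"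
    and deriv: "\<And>t. t \<ge> s \<Longrightarrow> (g has_real_derivative g' t) (at t within {s..})"
    and cont: "continuous_on {s..} g'"
    and ode: "\<And>t. t \<ge> s \<Longrightarrow> g' t = - g t + (1 / t) * integral {s..t} g + c / t"
  shows "g' s = - g s + c / s
    \<and> (\<forall>t\<ge>s. g t = g' s * s * exp s * I t s + g s)"
proof
  show "g' s = - g s + c / s" using ode[of s] by simp
  show "\<forall>t\<ge>s. g t = g' s * s * exp s * I t s + g s"
  proof (intro allI impI)
    fix T assume T: "s \<le> T"
    define S where "S = {s..T}"
    have dS: "\<And>t. t \<in> S \<Longrightarrow> (g has_real_derivative g' t) (at t within S)"
    proof -
      fix t assume "t \<in> S"
      hence "s \<le> t" by (simp add: S_def)
      show "(g has_real_derivative g' t) (at t within S)"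
        by (rule has_field_derivative_subset[OF deriv[OF \<open>s \<le> t\<close>]]) (auto simp: S_def)
    qed
    have gc: "continuous_on S g"
      by (rule DERIV_continuous_on) (use dS in blast)
    have G: "\<And>t. t \<in> S \<Longrightarrow> ((\<lambda>u. integral {s..u} g) has_real_derivative g t) (at t within S)"
      using integral_has_vector_derivative[OF gc[unfolded S_def]]
      by (simp add: S_def has_real_derivative_iff_has_vector_derivative)
    have e: "g' t * t = - t * g t + integral {s..t} g + c" if t: "t \<in> S" for t
    proof -
      have tp: "t > 0" using t s_pos by (auto simp: S_def)
      have "g' t * t = (- g t + (1 / t) * integral {s..t} g + c / t) * t"
        using ode[of t] t by (simp add: S_def)
      also have "\<dots> = - t * g t + integral {s..t} g + c"
        using tp by (simp add: distrib_right left_diff_distrib)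
      finally show ?thesis .
    qed
    define h where "h t = (- t * g t + integral {s..t} g + c) * exp t" for t
    have hd: "\<And>t. t \<in> S \<Longrightarrow> (h has_real_derivative 0) (at t within S)"
    proof -
      fix t assume t: "t \<in> S"
      have tp: "t > 0" using t s_pos by (auto simp: S_def)
      note e = e[OF t]
      have "(h has_real_derivative
         ((- g t - t * g' t + g t) * exp t + (- t * g t + integral {s..t} g + c) * exp t)) (at t within S)"
      proof -
        have a: "((\<lambda>u. - u * g u) has_real_derivative (- 1 * g t + (- t) * g' t)) (at t within S)"
          using DERIV_mult[OF DERIV_minus[OF DERIV_ident] dS[OF t]] by (simp add: mult.commute)
        have b: "((\<lambda>u. - u * g u + integral {s..u} g + c) has_real_derivative (- 1 * g t + (- t) * g' t) + g t + 0) (at t within S)"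
          by (rule DERIV_add[OF DERIV_add[OF a G[OF t]] DERIV_const])
        show ?thesis using DERIV_mult[OF b DERIV_exp[THEN has_field_derivative_at_within]]
          unfolding h_def[abs_def] by (simp add: algebra_simps)
      qed
      moreover have "(- g t - t * g' t + g t) * exp t + (- t * g t + integral {s..t} g + c) * exp t = 0"
      proof -
        have "(- g t - t * g' t + g t) * exp t + (- t * g t + integral {s..t} g + c) * exp t
          = (- (g' t * t) + (- t * g t + integral {s..t} g + c)) * exp t"
          by (simp add: algebra_simps)
        also have "\<dots> = 0" by (simp only: e) simp
        finally show ?thesis .
      qed
      ultimately show "(h has_real_derivative 0) (at t within S)" by simp
    qed
    obtain K where K: "\<And>t. t \<in> S \<Longrightarrow> h t = K"
    proof -
      have "\<exists>K. \<forall>x\<in>S. h x = K"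
        using has_field_derivative_zero_constant[OF _ hd] by (simp add: S_def)
      thus ?thesis using that by blast
    qed
    have gform: "g' t = g' s * s * exp s * (exp (- t) / t)" if t: "t \<in> S" for t
    proof -
      have tp: "t > 0" using t s_pos by (auto simp: S_def)
      have "\<And>u. u \<in> S \<Longrightarrow> h u = g' u * u * exp u"
        unfolding h_def using e by simp
      moreover have "s \<in> S" using T by (simp add: S_def)
      ultimately have "g' t * t * exp t = g' s * s * exp s" using K t by metis
      thus ?thesis using tp by (simp add: field_simps exp_minus)
    qed
    have ftc: "(g' has_integral g T - g s) {s..T}"
      by (rule fundamental_theorem_of_calculus[OF T])
         (simp add: dS[unfolded S_def] flip: has_real_derivative_iff_has_vector_derivative)
    have ci: "continuous_on {s..T} (\<lambda>\<xi>. exp (- \<xi>) / \<xi>)"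
      using s_pos by (intro continuous_intros) auto
    have "((\<lambda>\<xi>. exp (- \<xi>) / \<xi>) has_integral I T s) {s..T}"
      unfolding I_def using integrable_continuous_interval[OF ci] by (simp add: has_integral_integral)
    hence "((\<lambda>\<xi>. g' s * s * exp s * (exp (- \<xi>) / \<xi>)) has_integral g' s * s * exp s * I T s) {s..T}"
      by (rule has_integral_mult_right)
    hence "(g' has_integral g' s * s * exp s * I T s) {s..T}"
      by (rule has_integral_eq[rotated]) (rule sym, rule gform, simp add: S_def)
    with ftc have "g T - g s = g' s * s * exp s * I T s" by (rule has_integral_unique)
    thus "g T = g' s * s * exp s * I T s + g s" by simp
  qed
qed

end
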